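(* For all integers $n\geqslant2$ and $s\geqslant2$, every subset of cardinality $n-1$ of the family of events $\{A_{n,s,1},\dots,A_{n,s,n}\}$ is mutually independent, where $A_{n,s,i}$ is the event, defined in the context, that the $i$-th fluid flows from the centre to the boundary.
   Context: Consider the tiling of the plane by regular hexagons of side $1$, called cells. For an integer $s\geqslant2$, fix a cell $O$. Let $M_s$ be the set of all cells lying inside the regular hexagon that is centred at the centre of $O$, has sides of length $s\sqrt3$, and has its sides perpendicular to sides of the cells. The set $M_s$ has $m+1=1+3s(s-1)$ cells. Number the cells other than $O$ as $v_1,\dots,v_m$. Two cells are neighbours if they share a side. A cell of $M_s$ is a boundary cell if it has fewer than six neighbours in $M_s$. For an integer $n\geqslant2$, let $\Omega_{n,s}$ be the set of $n$-tuples $f=(f_1,\dots,f_n)$ of functions $f_i:\{v_1,\dots,v_m\}\to\{0,1\}$ such that $f_1+\dots+f_n\equiv1\pmod 2$ at every cell. Equip $\Omega_{n,s}$ with the uniform probability measure $P(A)=|A|\,2^{-(n-1)m}$. A path from the centre to the boundary is a sequence of pairwise distinct cells $v_{j_1},\dots,v_{j_t}$ with the following properties: - $v_{j_1}$ is a neighbour of $O$; - $v_{j_l}$ and $v_{j_{l+1}}$ are neighbours for each $l$; - $v_{j_t}$ is a boundary cell. The $i$-th fluid flows from the centre to the boundary for $f$ if there is such a path with $f_i(v_{j_l})=1$ for all $l$. Let $A_{n,s,i}\subset\Omega_{n,s}$ be this event. *)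

theory Defs
  imports "HOL-Probability.Probability"
begin

text \<open>Cells of the hexagonal tiling are given by axial coordinates in int \<times> int;
  the fixed cell O is (0,0).\<close>

type_synonym cell = "int \<times> int"

definition hex_nbr :: "cell \<Rightarrow> cell \<Rightarrow> bool" where
  "hex_nbr a b \<longleftrightarrow>
     (fst a - fst b, snd a - snd b) \<in> {(1,0),(-1,0),(0,1),(0,-1),(1,-1),(-1,1)}"

text \<open>Hex (graph) distance from O.\<close>
definition hex_dist :: "cell \<Rightarrow> int" where
  "hex_dist c = max \<bar>fst c\<bar> (max \<bar>snd c\<bar> \<bar>fst c + snd c\<bar>)"

text \<open>M_s: cells inside the hexagon of side s*sqrt 3 centred at O (sides perpendicular
  to cell sides) = cells at hex distance at most s-1; it has 1+3s(s-1) cells.\<close>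
definition Ms :: "nat \<Rightarrow> cell set" where
  "Ms s = {c. hex_dist c \<le> int s - 1}"

definition Vs :: "nat \<Rightarrow> cell set" where
  "Vs s = Ms s - {(0,0)}"

definition boundary_cell :: "nat \<Rightarrow> cell \<Rightarrow> bool" where
  "boundary_cell s c \<longleftrightarrow> c \<in> Ms s \<and> card {d \<in> Ms s. hex_nbr c d} < 6"

definition centre_path :: "nat \<Rightarrow> cell list \<Rightarrow> bool" where
  "centre_path s p \<longleftrightarrow>
     p \<noteq> [] \<and> distinct p \<and> set p \<subseteq> Vs s \<and>
     hex_nbr (hd p) (0,0) \<and>
     (\<forall>l. Suc l < length p \<longrightarrow> hex_nbr (p ! l) (p ! Suc l)) \<and>
     boundary_cell s (last p)"

definition Omega :: "nat \<Rightarrow> nat \<Rightarrow> (nat \<Rightarrow> cell \<Rightarrow> nat) set" where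
  "Omega n s = {f. f \<in> (\<Pi>\<^sub>E i\<in>{1..n}. (\<Pi>\<^sub>E v\<in>Vs s. {0, 1})) \<and>
                   (\<forall>v\<in>Vs s. odd (\<Sum>i=1..n. f i v))}"

definition Pns :: "nat \<Rightarrow> nat \<Rightarrow> (nat \<Rightarrow> cell \<Rightarrow> nat) measure" where
  "Pns n s = measure_pmf (pmf_of_set (Omega n s))"

definition flow_event :: "nat \<Rightarrow> nat \<Rightarrow> nat \<Rightarrow> (nat \<Rightarrow> cell \<Rightarrow> nat) set" where
  "flow_event n s i = {f \<in> Omega n s. \<exists>p. centre_path s p \<and> (\<forall>c\<in>set p. f i c = 1)}"

end

theory Submission
  imports Defs
begin

definition fill :: "cell set \<Rightarrow> nat set \<Rightarrow> nat \<Rightarrow> (nat \<Rightarrow> cell \<Rightarrow> nat) \<Rightarrow> (nat \<Rightarrow> cell \<Rightarrow> nat)" where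
  "fill V K j g = g(j := (\<lambda>v. if v \<in> V then (if odd (\<Sum>k\<in>K. g k v) then 0 else 1) else undefined))"

lemma bij_main:
  fixes V :: "cell set" and n j :: nat and S :: "nat \<Rightarrow> (cell \<Rightarrow> nat) set"
  assumes j: "j \<in> {1..n}" and SB: "\<And>i. S i \<subseteq> (\<Pi>\<^sub>E v\<in>V. {0, 1::nat})"
  shows "bij_betw (\<lambda>f. restrict f ({1..n}-{j}))
     {f\<in>{f. f \<in> (\<Pi>\<^sub>E i\<in>{1..n}. (\<Pi>\<^sub>E v\<in>V. {0, 1::nat})) \<and> (\<forall>v\<in>V. odd (\<Sum>i=1..n. f i v))}.
        \<forall>i\<in>{1..n}-{j}. f i \<in> S i}
     (Pi\<^sub>E ({1..n}-{j}) S)"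
proof (rule bij_betw_byWitness[where f'="fill V ({1..n}-{j}) j"])
  let ?K = "{1..n}-{j}"
  have split: "(\<Sum>i=1..n. f i v) = f j v + (\<Sum>k\<in>?K. f k v)" for f :: "nat \<Rightarrow> cell \<Rightarrow> nat" and v
    using j by (simp add: sum.remove)
  show "\<forall>a\<in>{f\<in>{f. f \<in> (\<Pi>\<^sub>E i\<in>{1..n}. (\<Pi>\<^sub>E v\<in>V. {0, 1::nat})) \<and> (\<forall>v\<in>V. odd (\<Sum>i=1..n. f i v))}.
        \<forall>i\<in>?K. f i \<in> S i}. fill V ?K j (restrict a ?K) = a"
  proof safe
    fix f assume f: "f \<in> (\<Pi>\<^sub>E i\<in>{1..n}. (\<Pi>\<^sub>E v\<in>V. {0, 1::nat}))" "\<forall>v\<in>V. odd (\<Sum>i=1..n. f i v)"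
    show "fill V ?K j (restrict f ?K) = f"
    proof (rule ext)
      fix i show "fill V ?K j (restrict f ?K) i = f i"
      proof (cases "i = j")
        case True
        show ?thesis
        proof (rule ext)
          fix v
          show "fill V ?K j (restrict f ?K) i v = f i v"
          proof (cases "v \<in> V")
            case True
            have "f j v \<in> {0,1}" using f(1) j True by (auto simp: PiE_iff)
            moreover have "odd (f j v + (\<Sum>k\<in>?K. f k v))" using f(2) True split by metis
            ultimately show ?thesis using True \<open>i = j\<close> by (auto simp: fill_def)
          next
            case False
            have "f j \<in> (\<Pi>\<^sub>E v\<in>V. {0, 1::nat})" using PiE_mem[OF f(1)] j by blast
            then have "f j v = undefined" using False by (metis PiE_arb)
            then show ?thesis using False \<open>i = j\<close> by (auto simp: fill_def)
          qed
        qed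
      next
        case False
        then show ?thesis using f(1) by (auto simp: fill_def PiE_iff extensional_def)
      qed
    qed
  qed
  show "\<forall>a'\<in>Pi\<^sub>E ?K S. restrict (fill V ?K j a') ?K = a'"
    by (auto simp: fill_def PiE_iff extensional_def restrict_def fun_eq_iff)
  show "(\<lambda>f. restrict f ?K) ` {f\<in>{f. f \<in> (\<Pi>\<^sub>E i\<in>{1..n}. (\<Pi>\<^sub>E v\<in>V. {0, 1::nat})) \<and> (\<forall>v\<in>V. odd (\<Sum>i=1..n. f i v))}.
        \<forall>i\<in>?K. f i \<in> S i} \<subseteq> Pi\<^sub>E ?K S"
    by (simp add: restrict_PiE_iff image_subset_iff)
  show "fill V ?K j ` Pi\<^sub>E ?K S \<subseteq> {f\<in>{f. f \<in> (\<Pi>\<^sub>E i\<in>{1..n}. (\<Pi>\<^sub>E v\<in>V. {0, 1::nat})) \<and> (\<forall>v\<in>V. odd (\<Sum>i=1..n. f i v))}.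
        \<forall>i\<in>?K. f i \<in> S i}"
  proof
    fix x assume "x \<in> fill V ?K j ` Pi\<^sub>E ?K S"
    then obtain g where g: "g \<in> Pi\<^sub>E ?K S" and x: "x = fill V ?K j g" by blast
    have gB: "g i \<in> (\<Pi>\<^sub>E v\<in>V. {0, 1::nat})" if "i \<in> ?K" for i using g SB that by blast
    have s2: "(\<Sum>k\<in>?K. fill V ?K j g k v) = (\<Sum>k\<in>?K. g k v)" for v
      by (rule sum.cong) (auto simp: fill_def)
    have "fill V ?K j g \<in> (\<Pi>\<^sub>E i\<in>{1..n}. (\<Pi>\<^sub>E v\<in>V. {0, 1::nat}))"
      using g gB j by (auto simp: fill_def PiE_iff extensional_def)
    moreover have "\<forall>v\<in>V. odd (\<Sum>i=1..n. fill V ?K j g i v)"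
      unfolding split s2 by (auto simp: fill_def)
    moreover have "\<forall>i\<in>?K. fill V ?K j g i \<in> S i" using g by (auto simp: fill_def)
    ultimately show "x \<in> {f\<in>{f. f \<in> (\<Pi>\<^sub>E i\<in>{1..n}. (\<Pi>\<^sub>E v\<in>V. {0, 1::nat})) \<and> (\<forall>v\<in>V. odd (\<Sum>i=1..n. f i v))}.
        \<forall>i\<in>?K. f i \<in> S i}" unfolding x by blast
  qed
qed

lemma finite_Vs: "finite (Vs s)"
proof -
  have "Vs s \<subseteq> {-int s..int s} \<times> {-int s..int s}"
    by (auto simp: Vs_def Ms_def hex_dist_def)
  then show ?thesis by (rule finite_subset) auto
qed

lemma prod_if_const:
  assumes "finite I" "J \<subseteq> I"
  shows "(\<Prod>i\<in>I. if i \<in> J then (t::nat) else b) = t ^ card J * b ^ (card I - card J)"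
proof -
  have "(\<Prod>i\<in>I. if i \<in> J then (t::nat) else b) = (\<Prod>i\<in>I \<inter> {x. x \<in> J}. t) * (\<Prod>i\<in>I \<inter> - {x. x \<in> J}. b)"
    by (rule prod.If_cases) (rule assms)
  also have "I \<inter> {x. x \<in> J} = J" using assms by auto
  also have "I \<inter> - {x. x \<in> J} = I - J" by auto
  also have "(\<Prod>i\<in>J. t) * (\<Prod>i\<in>I - J. b) = t ^ card J * b ^ (card I - card J)"
    using assms by (simp add: card_Diff_subset finite_subset)
  finally show ?thesis .
qed

theorem lemma1:
  fixes n s :: nat and I :: "nat set"
  assumes "n \<ge> 2" and "s \<ge> 2"
    and "I \<subseteq> {1..n}" and "card I = n - 1"
  shows "prob_space.indep_events (Pns n s) (flow_event n s) I"
proof -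
  define V where "V = Vs s"
  define B where "B = (\<Pi>\<^sub>E v\<in>V. {0, 1::nat})"
  define P where "P = (\<lambda>g. \<exists>p. centre_path s p \<and> (\<forall>c\<in>set p. g c = (1::nat)))"
  define T where "T = {g\<in>B. P g}"
  define b where "b = card B"
  define t where "t = card T"
  have finV: "finite V" unfolding V_def by (rule finite_Vs)
  have finB: "finite B" unfolding B_def using finV by (intro finite_PiE) auto
  have "B \<noteq> {}" unfolding B_def by (simp add: PiE_eq_empty_iff)
  then have bpos: "b > 0" unfolding b_def using finB by (simp add: card_gt_0_iff)
  have finI: "finite I" using assms(3) finite_subset by blast
  have "card ({1..n} - I) = 1" using assms(1,3,4) finI by (simp add: card_Diff_subset)
  then obtain j where j: "{1..n} - I = {j}" using card_1_singletonE by blast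
  then have jn: "j \<in> {1..n}" by auto
  have KI: "{1..n} - {j} = I" using j assms(3) by auto
  have Om: "Omega n s = {f\<in>{f. f \<in> (\<Pi>\<^sub>E i\<in>{1..n}. (\<Pi>\<^sub>E v\<in>V. {0, 1::nat})) \<and> (\<forall>v\<in>V. odd (\<Sum>i=1..n. f i v))}.
        \<forall>i\<in>{1..n}-{j}. f i \<in> B}"
    unfolding Omega_def V_def B_def by (blast dest: PiE_mem)
  have cnt: "card {f\<in>Omega n s. \<forall>i\<in>J. P (f i)} = t ^ card J * b ^ (card I - card J)"
    and fin: "finite {f\<in>Omega n s. \<forall>i\<in>J. P (f i)}"
    if J: "J \<subseteq> I" for J
  proof -
    define S where "S = (\<lambda>i. if i \<in> J then T else B)"
    have SB: "\<And>i. S i \<subseteq> (\<Pi>\<^sub>E v\<in>V. {0, 1::nat})" unfolding S_def T_def B_def by auto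
    have eq: "{f\<in>Omega n s. \<forall>i\<in>J. P (f i)} = {f\<in>{f. f \<in> (\<Pi>\<^sub>E i\<in>{1..n}. (\<Pi>\<^sub>E v\<in>V. {0, 1::nat})) \<and> (\<forall>v\<in>V. odd (\<Sum>i=1..n. f i v))}.
        \<forall>i\<in>{1..n}-{j}. f i \<in> S i}"
      unfolding Om S_def T_def using J KI by auto
    have bij: "bij_betw (\<lambda>f. restrict f ({1..n}-{j})) {f\<in>Omega n s. \<forall>i\<in>J. P (f i)} (Pi\<^sub>E I S)"
      unfolding eq KI[symmetric] by (rule bij_main[OF jn SB])
    have finS: "finite (Pi\<^sub>E I S)" using finI finB unfolding S_def T_def by (intro finite_PiE) auto
    show "finite {f\<in>Omega n s. \<forall>i\<in>J. P (f i)}" using bij_betw_finite[OF bij] finS by simp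
    have "card {f\<in>Omega n s. \<forall>i\<in>J. P (f i)} = card (Pi\<^sub>E I S)" using bij_betw_same_card[OF bij] .
    also have "\<dots> = (\<Prod>i\<in>I. card (S i))" using finI by (rule card_PiE)
    also have "\<dots> = (\<Prod>i\<in>I. if i \<in> J then t else b)" unfolding S_def t_def b_def
      by (rule prod.cong) auto
    also have "\<dots> = t ^ card J * b ^ (card I - card J)" using finI J by (rule prod_if_const)
    finally show "card {f\<in>Omega n s. \<forall>i\<in>J. P (f i)} = t ^ card J * b ^ (card I - card J)" .
  qed
  have OmE: "Omega n s = {f\<in>Omega n s. \<forall>i\<in>{}. P (f i)}" by simp
  have finO: "finite (Omega n s)" using fin[of "{}"] OmE by simp
  have cardO: "card (Omega n s) = b ^ card I" using cnt[of "{}"] OmE by simp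
  have neO: "Omega n s \<noteq> {}" using cardO bpos by (metis card.empty power_not_zero less_irrefl)
  interpret prob_space "Pns n s" unfolding Pns_def by (rule prob_space_measure_pmf)
  have FE: "flow_event n s i = {f\<in>Omega n s. P (f i)}" for i
    unfolding flow_event_def P_def by simp
  have pr: "prob A = real (card (Omega n s \<inter> A)) / real (card (Omega n s))" for A
    unfolding Pns_def using measure_pmf_of_set[OF neO finO] by simp
  have key: "prob {f\<in>Omega n s. \<forall>i\<in>J. P (f i)} = (real t / real b) ^ card J" if J: "J \<subseteq> I" for J
  proof -
    have cJ: "card J \<le> card I" using J finI by (simp add: card_mono)
    have e: "Omega n s \<inter> {f\<in>Omega n s. \<forall>i\<in>J. P (f i)} = {f\<in>Omega n s. \<forall>i\<in>J. P (f i)}" by auto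
    have "prob {f\<in>Omega n s. \<forall>i\<in>J. P (f i)} = real (t ^ card J * b ^ (card I - card J)) / real (b ^ card I)"
      unfolding pr cardO e cnt[OF J] ..
    also have "real (b ^ card I) = real b ^ card J * real b ^ (card I - card J)"
      using cJ by (simp add: power_add[symmetric])
    finally show ?thesis using bpos by (simp add: power_divide)
  qed
  show ?thesis
    unfolding indep_events_def
  proof (intro conjI allI impI)
    show "flow_event n s ` I \<subseteq> events" unfolding Pns_def by simp
    fix J assume J: "J \<subseteq> I" "J \<noteq> {}" "finite J"
    have "(\<Inter>j\<in>J. flow_event n s j) = {f\<in>Omega n s. \<forall>i\<in>J. P (f i)}"
      unfolding FE using J(2) by auto
    then have "prob (\<Inter>j\<in>J. flow_event n s j) = (real t / real b) ^ card J" using key[OF J(1)] by simp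
    also have "\<dots> = (\<Prod>j\<in>J. prob (flow_event n s j))"
    proof -
      have "prob (flow_event n s i) = real t / real b" if "i \<in> J" for i
        using key[of "{i}"] that J(1) unfolding FE by auto
      then show ?thesis by simp
    qed
    finally show "prob (\<Inter>j\<in>J. flow_event n s j) = (\<Prod>j\<in>J. prob (flow_event n s j))" .
  qed
qed

end
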